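(* Let $n\ge1$, $v>0$, $0\le\rho<\frac12v$, and let $B=(b_{jk})_{j,k=0}^n$ with $b_{jk}=v-k$ if $j>k$, $b_{kk}=\frac v2-k-\rho$, $b_{jk}=-j$ if $j<k$. The unique ESS $\mathbf{p}=(p_0,\dots,p_n)^T$ of $B$ is given as follows. If $v\ge2n+2\rho$, then $p_0=\dots=p_{n-1}=0$, $p_n=1$. Otherwise there is a unique index $s\in\{0,\dots,n-1\}$ such that $n-1+\rho\le\frac v2+s<n+\rho$, and $$p_k=\frac1c\Big(-\frac v2-\rho\Big)^k\Big\{u_{s-k+1}+\Big(s+1-n+\frac v2+\rho\Big)u_{s-k}+(s+1-n)\Big(\frac v2+\rho\Big)u_{s-k-1}\Big\},\quad0\le k\le s,$$ $$p_k=0,\quad s+1\le k\le n-1,\qquad p_n=\frac1c\Big(-\frac v2-\rho\Big)^{s+1},$$ where $\gamma=\sqrt{\frac{v^2}{4}-\rho^2}$, $u_k=(-i\gamma)^kU_k\big(-\frac{i(2\rho+1)}{2\gamma}\big)$ and $$c=-u_{s+2}+(n-s-1-2\rho)u_{s+1}+\{2\rho(n-s-1)+\gamma^2\}u_s-(n-s-1)\gamma^2u_{s-1}.$$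
   Context: $U_m$ denotes the $m$th Chebyshev polynomial of the second kind (evaluated at complex arguments as a polynomial), with the convention $U_{-1}\equiv0$; $i=\sqrt{-1}$. Strategies are indexed $0,\dots,n$, $\overline\Delta=\{\mathbf{q}\in[0,1]^{n+1}:\sum q_j=1\}$. $\mathbf{p}\in\overline\Delta$ is an ESS for $B$ if (i) $\mathbf{p}^TB\mathbf{p}\ge\mathbf{q}^TB\mathbf{p}$ for all $\mathbf{q}\in\overline\Delta$ and (ii) whenever $\mathbf{q}\ne\mathbf{p}$ and $\mathbf{p}^TB\mathbf{p}=\mathbf{q}^TB\mathbf{p}$, then $\mathbf{p}^TB\mathbf{q}>\mathbf{q}^TB\mathbf{q}$. *)

theory Defs
  imports Complex_Main
begin

fun chebU :: "nat \<Rightarrow> complex \<Rightarrow> complex" where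
  "chebU 0 x = 1"
| "chebU (Suc 0) x = 2 * x"
| "chebU (Suc (Suc m)) x = 2 * x * chebU (Suc m) x - chebU m x"

definition chebU_int :: "int \<Rightarrow> complex \<Rightarrow> complex" where
  "chebU_int m x = (if m < 0 then 0 else chebU (nat m) x)"

text \<open>Strategies are indexed 0..n; a mixed strategy is a function nat => real, only values on {0..n} matter.\<close>
definition simplex :: "nat \<Rightarrow> (nat \<Rightarrow> real) \<Rightarrow> bool" where
  "simplex n q \<longleftrightarrow> (\<forall>j\<le>n. 0 \<le> q j \<and> q j \<le> 1) \<and> (\<Sum>j\<le>n. q j) = 1"

definition bilin :: "nat \<Rightarrow> (nat \<Rightarrow> nat \<Rightarrow> real) \<Rightarrow> (nat \<Rightarrow> real) \<Rightarrow> (nat \<Rightarrow> real) \<Rightarrow> real" where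
  "bilin n B q p = (\<Sum>j\<le>n. \<Sum>k\<le>n. q j * B j k * p k)"

definition ESS :: "nat \<Rightarrow> (nat \<Rightarrow> nat \<Rightarrow> real) \<Rightarrow> (nat \<Rightarrow> real) \<Rightarrow> bool" where
  "ESS n B p \<longleftrightarrow> simplex n p \<and>
     (\<forall>q. simplex n q \<longrightarrow> bilin n B p p \<ge> bilin n B q p) \<and>
     (\<forall>q. simplex n q \<and> (\<exists>j\<le>n. q j \<noteq> p j) \<and> bilin n B p p = bilin n B q p
          \<longrightarrow> bilin n B p q > bilin n B q q)"

definition payoffB :: "real \<Rightarrow> real \<Rightarrow> nat \<Rightarrow> nat \<Rightarrow> real" where
  "payoffB v \<rho> j k = (if j > k then v - real k
                      else if j = k then v / 2 - real k - \<rho>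
                      else - real j)"

definition gam :: "real \<Rightarrow> real \<Rightarrow> real" where
  "gam v \<rho> = sqrt (v^2 / 4 - \<rho>^2)"

definition uu :: "real \<Rightarrow> real \<Rightarrow> int \<Rightarrow> complex" where
  "uu v \<rho> k = (if k < 0 then 0 else
      (- \<i> * complex_of_real (gam v \<rho>)) ^ nat k *
      chebU_int k (- \<i> * complex_of_real (2 * \<rho> + 1) / (2 * complex_of_real (gam v \<rho>))))"

definition cc :: "nat \<Rightarrow> real \<Rightarrow> real \<Rightarrow> nat \<Rightarrow> complex" where
  "cc n v \<rho> s = (let g = complex_of_real (gam v \<rho>); m = of_int (int n - int s - 1) :: complex in
      - uu v \<rho> (int s + 2) + (m - 2 * complex_of_real \<rho>) * uu v \<rho> (int s + 1)
      + (2 * complex_of_real \<rho> * m + g^2) * uu v \<rho> (int s)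
      - m * g^2 * uu v \<rho> (int s - 1))"

end

theory Submission
  imports Defs
begin

fun ws :: "real \<Rightarrow> real \<Rightarrow> nat \<Rightarrow> real" where
  "ws a b 0 = 1"
| "ws a b (Suc 0) = a - b + 1"
| "ws a b (Suc (Suc k)) = (a - b + 1) * ws a b (Suc k) + a * b * ws a b k"

definition wi :: "real \<Rightarrow> real \<Rightarrow> int \<Rightarrow> real" where
  "wi a b j = (if j < 0 then 0 else ws a b (nat j))"

lemma ws_pos: "a > 0 \<Longrightarrow> b > 0 \<Longrightarrow> a - b + 1 > 0 \<Longrightarrow> ws a b k > 0"
  by (induction a b k rule: ws.induct) (auto intro!: add_pos_pos mult_pos_pos)

lemma wi_m1[simp]: "wi a b (-1) = 0" by (simp add: wi_def)
lemma wi_0[simp]: "wi a b 0 = 1" by (simp add: wi_def)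
lemma wi_1[simp]: "wi a b 1 = a - b + 1" by (simp add: wi_def)

lemma wi_rec: assumes "j \<ge> -1"
  shows "wi a b (j + 2) = (a - b + 1) * wi a b (j + 1) + a * b * wi a b j"
proof (cases "j = -1")
  case True then show ?thesis by simp
next
  case False
  then have "j \<ge> 0" using assms by simp
  then have "nat (j + 2) = Suc (Suc (nat j))" "nat (j + 1) = Suc (nat j)" by auto
  then show ?thesis using \<open>j \<ge> 0\<close> by (simp add: wi_def)
qed

lemma wi_rec1: assumes "j \<ge> 0"
  shows "wi a b (j + 1) = (a - b + 1) * wi a b j + a * b * wi a b (j - 1)"
proof -
  have e: "j - 1 + 2 = j + 1" "j - 1 + 1 = j" by simp_all
  show ?thesis using wi_rec[of "j - 1" a b] assms unfolding e by simp
qed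

lemma wi_nat: "wi a b (int k) = ws a b k" by (simp add: wi_def)

definition ff :: "real \<Rightarrow> real \<Rightarrow> real \<Rightarrow> int \<Rightarrow> real" where
  "ff a b m j = wi a b (j + 1) - (a - m) * wi a b j - m * a * wi a b (j - 1)"

lemma ff_alt: assumes "j \<ge> 0"
  shows "ff a b m j = (m + 1 - b) * wi a b j + a * (b - m) * wi a b (j - 1)"
proof -
  have "wi a b (j + 1) = (a - b + 1) * wi a b j + a * b * wi a b (j - 1)"
    using wi_rec1[of j a b] assms by simp
  then show ?thesis unfolding ff_def by (simp add: algebra_simps)
qed

lemma ff_pos: assumes "j \<ge> 0" "a > 0" "b > 0" "a - b + 1 > 0" "m \<le> b" "b < m + 1"
  shows "ff a b m j > 0"
proof -
  have "wi a b j > 0" using assms ws_pos[of a b "nat j"] by (simp add: wi_def)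
  moreover have "wi a b (j - 1) \<ge> 0" using assms ws_pos[of a b "nat (j - 1)"] by (simp add: wi_def)
  ultimately show ?thesis using assms by (simp add: ff_alt add_pos_nonneg)
qed

lemma ff_rec: assumes "j \<ge> 0"
  shows "ff a b m (j + 2) = (a - b + 1) * ff a b m (j + 1) + a * b * ff a b m j"
proof -
  have 1: "wi a b (j + 3) = (a - b + 1) * wi a b (j + 2) + a * b * wi a b (j + 1)"
    using wi_rec[of "j + 1" a b] assms by (simp add: add.assoc)
  have 2: "wi a b (j + 2) = (a - b + 1) * wi a b (j + 1) + a * b * wi a b j"
    using wi_rec[of "j" a b] assms by simp
  have 3: "wi a b (j + 1) = (a - b + 1) * wi a b j + a * b * wi a b (j - 1)"
    using wi_rec1[of j a b] assms by simp
  have e: "j + 2 + 1 = j + 3" "j + 2 - 1 = j + 1" "j + 1 + 1 = j + 2" "j + 1 - 1 = j" by simp_all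
  show ?thesis unfolding ff_def e 1 2 3
    by (simp add: algebra_simps)
qed

lemma ff0: "ff a b m 0 = m + 1 - b" by (simp add: ff_def)
lemma ff1: "ff a b m 1 + (b - 1) * ff a b m 0 = a"
proof -
  have "wi a b 2 = (a - b + 1) * (a - b + 1) + a * b" using wi_rec[of 0 a b] by simp
  then show ?thesis by (simp add: ff_def algebra_simps)
qed

definition CC :: "real \<Rightarrow> real \<Rightarrow> real \<Rightarrow> int \<Rightarrow> real" where
  "CC a b m s = wi a b (s + 2) + (m - (a - b)) * wi a b (s + 1)
     - ((a - b) * m + a * b) * wi a b s - m * a * b * wi a b (s - 1)"

lemma CC_step: assumes "s \<ge> 0"
  shows "CC a b m (s + 1) = ff a b m (s + 1) + a * CC a b m s"
proof -
  have 1: "wi a b (s + 3) = (a - b + 1) * wi a b (s + 2) + a * b * wi a b (s + 1)"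
    using wi_rec[of "s + 1" a b] assms by (simp add: add.assoc)
  have 2: "wi a b (s + 2) = (a - b + 1) * wi a b (s + 1) + a * b * wi a b s"
    using wi_rec[of "s" a b] assms by simp
  have 3: "wi a b (s + 1) = (a - b + 1) * wi a b s + a * b * wi a b (s - 1)"
    using wi_rec1[of s a b] assms by simp
  have e: "s + 1 + 2 = s + 3" "s + 1 + 1 = s + 2" "s + 1 - 1 = s" by simp_all
  show ?thesis unfolding CC_def ff_def e 1 2 3
    by (simp add: algebra_simps)
qed

lemma sum_ff: "(\<Sum>k\<le>s. a ^ k * ff a b m (int s - int k)) + a ^ (s + 1) = CC a b m (int s)"
proof (induction s)
  case 0
  have "wi a b 2 = (a - b + 1) * (a - b + 1) + a * b" using wi_rec[of 0 a b] by simp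
  then show ?case by (simp add: CC_def ff_def algebra_simps)
next
  case (Suc s)
  have "(\<Sum>k\<le>Suc s. a ^ k * ff a b m (int (Suc s) - int k))
      = ff a b m (1 + int s) + a * (\<Sum>k\<le>s. a ^ k * ff a b m (int s - int k))"
    apply (subst sum.atMost_Suc_shift)
    apply (simp add: sum_distrib_left mult.assoc)
    done
  moreover have "(\<Sum>k\<le>s. a ^ k * ff a b m (int s - int k)) = CC a b m (int s) - a ^ (s + 1)"
    using Suc.IH by simp
  ultimately have "(\<Sum>k\<le>Suc s. a ^ k * ff a b m (int (Suc s) - int k)) + a ^ (Suc s + 1)
     = ff a b m (int s + 1) + a * CC a b m (int s)"
    by (simp add: algebra_simps)
  then show ?case using CC_step[of "int s" a b m] by (simp add: add.commute)
qed


lemma gam_props: assumes "0 \<le> \<rho>" "\<rho> < v / 2"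
  shows "gam v \<rho> > 0" "(gam v \<rho>)^2 = (v/2 + \<rho>) * (v/2 - \<rho>)"
proof -
  have "\<rho>^2 < (v/2)^2" using assms by (intro power_strict_mono) auto
  then have pos: "v^2/4 - \<rho>^2 > 0" by (simp add: power_divide)
  then show "gam v \<rho> > 0" by (simp add: gam_def)
  show "(gam v \<rho>)^2 = (v/2 + \<rho>) * (v/2 - \<rho>)" using pos
    by (simp add: gam_def power2_eq_square algebra_simps)
qed

lemma uu_eq: assumes "0 \<le> \<rho>" "\<rho> < v / 2"
  shows "uu v \<rho> (int k) = complex_of_real ((-1)^k * ws (v/2 + \<rho>) (v/2 - \<rho>) k)"
proof -
  define g where "g = gam v \<rho>"
  define Z where "Z = - \<i> * complex_of_real g"
  define x where "x = - \<i> * complex_of_real (2 * \<rho> + 1) / (2 * complex_of_real g)"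
  have gp: "g > 0" "g^2 = (v/2 + \<rho>) * (v/2 - \<rho>)" using gam_props[OF assms] by (auto simp: g_def)
  have Zx: "Z * (2 * x) = - complex_of_real (2 * \<rho> + 1)"
    using gp(1) by (simp add: Z_def x_def field_simps)
  have Z2: "Z^2 = - complex_of_real ((v/2 + \<rho>) * (v/2 - \<rho>))"
    unfolding Z_def using gp(2)
    by (simp add: power_mult_distrib flip: of_real_power)
  have u: "uu v \<rho> (int k) = Z^k * chebU k x" for k
    by (simp add: uu_def chebU_int_def Z_def x_def g_def)
  let ?w = "ws (v/2 + \<rho>) (v/2 - \<rho>)"
  have sig: "v/2 + \<rho> - (v/2 - \<rho>) + 1 = 2 * \<rho> + 1" by simp
  have "Z^k * chebU k x = complex_of_real ((-1)^k * ?w k) \<and>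
        Z^(Suc k) * chebU (Suc k) x = complex_of_real ((-1)^(Suc k) * ?w (Suc k))"
  proof (induction k)
    case 0
    then show ?case using Zx by (simp add: sig mult.commute)
  next
    case (Suc k)
    have "Z^(Suc (Suc k)) * chebU (Suc (Suc k)) x
        = (Z * (2 * x)) * (Z^(Suc k) * chebU (Suc k) x) - Z^2 * (Z^k * chebU k x)"
      by (simp add: algebra_simps power2_eq_square)
    also have "\<dots> = complex_of_real ((-1)^(Suc (Suc k)) * ?w (Suc (Suc k)))"
      using Suc.IH unfolding Zx Z2 by (simp add: sig algebra_simps)
    finally show ?case using Suc.IH by simp
  qed
  then show ?thesis using u by simp
qed


definition sg :: "int \<Rightarrow> real" where "sg j = (if even j then 1 else -1)"

lemma sg_add: "sg (x + y) = sg x * sg y" by (auto simp: sg_def)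
lemma sg_1: "sg (x + 1) = - sg x" by (auto simp: sg_def)
lemma sg_m1: "sg (x - 1) = - sg x" by (auto simp: sg_def)
lemma sg_sq: "sg x * sg x = 1" by (auto simp: sg_def)
lemma sg_nz: "sg x \<noteq> 0" by (auto simp: sg_def)
lemma sg_nat: "(-1::real) ^ k = sg (int k)" by (simp add: sg_def minus_one_power_iff)

lemma uu_sg: assumes "0 \<le> \<rho>" "\<rho> < v / 2" "j \<ge> -1"
  shows "uu v \<rho> j = complex_of_real (sg j * wi (v/2 + \<rho>) (v/2 - \<rho>) j)"
proof (cases "j = -1")
  case True then show ?thesis by (simp add: uu_def)
next
  case False
  then have "j = int (nat j)" using assms by simp
  then show ?thesis using uu_eq[OF assms(1,2), of "nat j"]
    by (metis sg_nat wi_nat)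
qed

lemma cc_real: assumes "0 \<le> \<rho>" "\<rho> < v / 2" "s < n"
  shows "cc n v \<rho> s = complex_of_real (sg (int s + 1) *
     CC (v/2 + \<rho>) (v/2 - \<rho>) (real n - real s - 1) (int s))"
proof -
  define a where "a = v/2 + \<rho>"
  define b where "b = v/2 - \<rho>"
  define m where "m = real n - real s - 1"
  have g2: "(complex_of_real (gam v \<rho>))^2 = complex_of_real (a * b)"
    using gam_props(2)[OF assms(1,2)] by (simp add: a_def b_def flip: of_real_power)
  have mm: "(of_int (int n - int s - 1) :: complex) = complex_of_real m"
    using assms(3) by (simp add: m_def of_nat_diff)
  have rr: "2 * complex_of_real \<rho> = complex_of_real (a - b)" by (simp add: a_def b_def)
  have u: "uu v \<rho> (int s + 2) = complex_of_real (sg (int s + 1) * (- wi a b (int s + 2)))"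
     "uu v \<rho> (int s + 1) = complex_of_real (sg (int s + 1) * wi a b (int s + 1))"
     "uu v \<rho> (int s) = complex_of_real (sg (int s + 1) * (- wi a b (int s)))"
     "uu v \<rho> (int s - 1) = complex_of_real (sg (int s + 1) * wi a b (int s - 1))"
  proof -
    have s1: "sg (int s + 2) = - sg (int s + 1)" using sg_1[of "int s + 1"] by (simp add: add.assoc)
    have s0: "sg (int s) = - sg (int s + 1)" using sg_1[of "int s"] by simp
    have sm: "sg (int s - 1) = sg (int s + 1)" using sg_1[of "int s"] sg_m1[of "int s"] by simp
    show "uu v \<rho> (int s + 2) = complex_of_real (sg (int s + 1) * (- wi a b (int s + 2)))"
      using uu_sg[OF assms(1,2), of "int s + 2"] unfolding a_def b_def s1 by simp
    show "uu v \<rho> (int s + 1) = complex_of_real (sg (int s + 1) * wi a b (int s + 1))"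
      using uu_sg[OF assms(1,2), of "int s + 1"] unfolding a_def b_def by simp
    show "uu v \<rho> (int s) = complex_of_real (sg (int s + 1) * (- wi a b (int s)))"
      using uu_sg[OF assms(1,2), of "int s"] unfolding a_def b_def s0 by simp
    show "uu v \<rho> (int s - 1) = complex_of_real (sg (int s + 1) * wi a b (int s - 1))"
      using uu_sg[OF assms(1,2), of "int s - 1"] unfolding a_def b_def sm by simp
  qed
  show ?thesis
    unfolding cc_def Let_def g2 mm u rr CC_def a_def[symmetric] b_def[symmetric] m_def[symmetric]
    by (simp add: algebra_simps)
qed


lemma bilin_row: "bilin n B q p = (\<Sum>j\<le>n. q j * (\<Sum>k\<le>n. B j k * p k))"
  by (simp add: bilin_def sum_distrib_left mult.assoc)

lemma bilin_expand:
  "bilin n B (\<lambda>j. p j - q j) (\<lambda>j. p j - q j)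
   = bilin n B p p - bilin n B p q - bilin n B q p + bilin n B q q"
  by (simp add: bilin_def algebra_simps sum_subtractf sum.distrib)

lemma stable_ESS:
  assumes neg: "\<And>x. (\<Sum>j\<le>n. x j) = 0 \<Longrightarrow> (\<exists>j\<le>n. x j \<noteq> 0) \<Longrightarrow> bilin n B x x < 0"
    and sp: "simplex n p" and ne: "\<And>q. simplex n q \<Longrightarrow> bilin n B q p \<le> bilin n B p p"
  shows "ESS n B p \<and> (\<forall>q. ESS n B q \<longrightarrow> (\<forall>j\<le>n. q j = p j))"
proof -
  have diff: "bilin n B p p - bilin n B p q - bilin n B q p + bilin n B q q < 0"
    if "simplex n q" "\<exists>j\<le>n. q j \<noteq> p j" for q
  proof -
    have "(\<Sum>j\<le>n. p j - q j) = 0" using sp that(1) by (simp add: simplex_def sum_subtractf)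
    moreover have "\<exists>j\<le>n. p j - q j \<noteq> 0" using that(2) by auto
    ultimately have "bilin n B (\<lambda>j. p j - q j) (\<lambda>j. p j - q j) < 0" by (rule neg)
    then show ?thesis by (simp add: bilin_expand)
  qed
  have "ESS n B p"
    unfolding ESS_def using sp ne diff by force
  moreover have "\<forall>q. ESS n B q \<longrightarrow> (\<forall>j\<le>n. q j = p j)"
  proof (rule allI, rule impI, rule ccontr)
    fix q assume q: "ESS n B q" and "\<not> (\<forall>j\<le>n. q j = p j)"
    then have ex: "\<exists>j\<le>n. q j \<noteq> p j" by auto
    have sq: "simplex n q" using q by (simp add: ESS_def)
    have "bilin n B p q \<le> bilin n B q q" using q sp by (simp add: ESS_def)
    moreover have "bilin n B q p \<le> bilin n B p p" using ne sq by simp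
    ultimately show False using diff[OF sq ex] by simp
  qed
  ultimately show ?thesis by simp
qed

lemma NE_suff:
  assumes sp: "simplex n p"
    and le: "\<And>j. j \<le> n \<Longrightarrow> (\<Sum>k\<le>n. B j k * p k) \<le> E"
    and eq: "\<And>j. j \<le> n \<Longrightarrow> p j \<noteq> 0 \<Longrightarrow> (\<Sum>k\<le>n. B j k * p k) = E"
  shows "\<And>q. simplex n q \<Longrightarrow> bilin n B q p \<le> bilin n B p p"
proof -
  have pp: "bilin n B p p = E"
  proof -
    have "bilin n B p p = (\<Sum>j\<le>n. p j * E)"
      unfolding bilin_row by (rule sum.cong[OF refl]) (metis atMost_iff eq mult_zero_left)
    also have "\<dots> = E" using sp by (simp add: simplex_def flip: sum_distrib_right)
    finally show ?thesis .
  qed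
  fix q assume sq: "simplex n q"
  have "bilin n B q p \<le> (\<Sum>j\<le>n. q j * E)"
    unfolding bilin_row using sq le by (intro sum_mono mult_left_mono) (auto simp: simplex_def)
  also have "\<dots> = E" using sq by (simp add: simplex_def flip: sum_distrib_right)
  finally show "bilin n B q p \<le> bilin n B p p" using pp by simp
qed

lemma row_formula:
  assumes "j \<le> n"
  shows "(\<Sum>k\<le>n. payoffB v \<rho> j k * p k)
    = (\<Sum>k<j. (v - real k) * p k) + (v/2 - real j - \<rho>) * p j - real j * (\<Sum>k\<in>{j<..n}. p k)"
  using assms
proof (induction n rule: dec_induct)
  case base
  have "(\<Sum>k\<le>j. payoffB v \<rho> j k * p k) = (\<Sum>k<j. payoffB v \<rho> j k * p k) + payoffB v \<rho> j j * p j"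
    by (simp add: lessThan_Suc_atMost[symmetric])
  moreover have "(\<Sum>k<j. payoffB v \<rho> j k * p k) = (\<Sum>k<j. (v - real k) * p k)"
    by (rule sum.cong) (auto simp: payoffB_def)
  ultimately show ?case by (simp add: payoffB_def)
next
  case (step m)
  have "{j<..Suc m} = insert (Suc m) {j<..m}" using step by auto
  then have "(\<Sum>k\<in>{j<..Suc m}. p k) = p (Suc m) + (\<Sum>k\<in>{j<..m}. p k)" by simp
  then show ?case using step by (simp add: payoffB_def algebra_simps)
qed


lemma min_as_sum:
  assumes "j \<le> n" "k \<le> n"
  shows "real (min j k) = (\<Sum>l\<in>{1..n}. if l \<le> j \<and> l \<le> k then 1 else 0)"
proof -
  have "{1..n} \<inter> {l. l \<le> j \<and> l \<le> k} = {1..min j k}" using assms by auto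
  then show ?thesis by (simp add: sum.If_cases)
qed

lemma B_sym: "payoffB v \<rho> j k + payoffB v \<rho> k j
   = v - 2 * real (min j k) - (if j = k then 2 * \<rho> else 0)"
  by (auto simp: payoffB_def min_def)

lemma qf_neg:
  assumes rho: "0 \<le> \<rho>" and S: "(\<Sum>j\<le>n. x j) = 0" and ex: "\<exists>j\<le>n. x j \<noteq> 0"
  shows "bilin n (payoffB v \<rho>) x x < 0"
proof -
  define B where "B = payoffB v \<rho>"
  define T where "T l = (\<Sum>j\<le>n. if l \<le> j then x j else 0)" for l
  have sw: "bilin n B x x = (\<Sum>j\<le>n. \<Sum>k\<le>n. x j * B k j * x k)"
    unfolding bilin_def by (subst sum.swap) (simp add: mult.commute mult.left_commute)
  have "2 * bilin n B x x = (\<Sum>j\<le>n. \<Sum>k\<le>n. x j * x k * (B j k + B k j))"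
    unfolding mult_2 apply (subst (2) sw) unfolding bilin_def
    by (simp add: algebra_simps sum.distrib)
  also have "\<dots> = (\<Sum>j\<le>n. \<Sum>k\<le>n. x j * x k * v) - 2 * (\<Sum>j\<le>n. \<Sum>k\<le>n. x j * x k * real (min j k))
       - (\<Sum>j\<le>n. \<Sum>k\<le>n. x j * x k * (if j = k then 2 * \<rho> else 0))"
    unfolding B_def B_sym by (simp add: algebra_simps sum_subtractf sum_distrib_left sum.distrib)
  also have "(\<Sum>j\<le>n. \<Sum>k\<le>n. x j * x k * v) = 0"
    using S by (simp add: mult.assoc flip: sum_distrib_left sum_distrib_right)
  also have "(\<Sum>j\<le>n. \<Sum>k\<le>n. x j * x k * (if j = k then 2 * \<rho> else 0)) = (\<Sum>j\<le>n. 2 * \<rho> * (x j)^2)"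
    by (rule sum.cong[OF refl]) (simp add: if_distrib power2_eq_square cong: if_cong)
  also have "(\<Sum>j\<le>n. \<Sum>k\<le>n. x j * x k * real (min j k)) = (\<Sum>l\<in>{1..n}. (T l)^2)"
  proof -
    have "(\<Sum>j\<le>n. \<Sum>k\<le>n. x j * x k * real (min j k))
        = (\<Sum>j\<le>n. \<Sum>k\<le>n. \<Sum>l\<in>{1..n}. (if l \<le> j then x j else 0) * (if l \<le> k then x k else 0))"
      by (intro sum.cong refl) (auto simp: min_as_sum sum_distrib_left intro!: sum.cong)
    also have "\<dots> = (\<Sum>l\<in>{1..n}. \<Sum>j\<le>n. \<Sum>k\<le>n. (if l \<le> j then x j else 0) * (if l \<le> k then x k else 0))"
      by (subst sum.swap) (subst (2) sum.swap, rule refl)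
    also have "\<dots> = (\<Sum>l\<in>{1..n}. (T l)^2)"
      unfolding T_def power2_eq_square sum_product by simp
    finally show ?thesis .
  qed
  finally have L: "2 * bilin n B x x = - 2 * (\<Sum>l\<in>{1..n}. (T l)^2) - 2 * \<rho> * (\<Sum>j\<le>n. (x j)^2)"
    by (simp add: sum_distrib_left sum_negf)
  have nn1: "(\<Sum>l\<in>{1..n}. (T l)^2) \<ge> 0" by (simp add: sum_nonneg)
  have nn2: "\<rho> * (\<Sum>j\<le>n. (x j)^2) \<ge> 0" using rho by (simp add: sum_nonneg)
  show ?thesis
  proof (rule ccontr)
    assume "\<not> bilin n (payoffB v \<rho>) x x < 0"
    then have "(\<Sum>l\<in>{1..n}. (T l)^2) = 0" using L nn1 nn2 unfolding B_def by linarith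
    then have T0: "\<forall>l\<in>{1..n}. T l = 0" by (simp add: sum_nonneg_eq_0_iff)
    have Tall: "T l = 0" if "l \<le> Suc n" for l
    proof -
      show ?thesis
      proof (cases "l = 0")
        case True then show ?thesis using S by (simp add: T_def)
      next
        case False
        show ?thesis
        proof (cases "l = Suc n")
          case True then show ?thesis by (simp add: T_def)
        next
          case F2: False
          then have "l \<in> {1..n}" using False that by auto
          then show ?thesis using T0 by simp
        qed
      qed
    qed
    have "x j = 0" if "j \<le> n" for j
    proof -
      have "T j - T (Suc j) = (\<Sum>i\<le>n. if i = j then x i else 0)"
        unfolding T_def sum_subtractf[symmetric] by (rule sum.cong) auto
      also have "\<dots> = x j" using that by simp
      finally show ?thesis using Tall that by simp
    qed
    then show False using ex by auto
  qed
qed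


lemma row_diff:
  assumes "Suc j \<le> n"
  shows "(\<Sum>k\<le>n. payoffB v \<rho> (Suc j) k * p k) - (\<Sum>k\<le>n. payoffB v \<rho> j k * p k)
    = (v/2 + \<rho>) * p j + (v/2 - \<rho> - 1) * p (Suc j) - (\<Sum>k\<in>{Suc j<..n}. p k)"
proof -
  have "{j<..n} = insert (Suc j) {Suc j<..n}" using assms by auto
  then have "(\<Sum>k\<in>{j<..n}. p k) = p (Suc j) + (\<Sum>k\<in>{Suc j<..n}. p k)" by simp
  moreover note row_formula[of "Suc j" n v \<rho> p] row_formula[of j n v \<rho> p]
  ultimately show ?thesis using assms
    by (simp add: algebra_simps)
qed

lemma key_ESS:
  assumes "0 \<le> \<rho>" "simplex n p"
    "\<And>q. simplex n q \<Longrightarrow> bilin n (payoffB v \<rho>) q p \<le> bilin n (payoffB v \<rho>) p p"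
  shows "ESS n (payoffB v \<rho>) p \<and> (\<forall>q. ESS n (payoffB v \<rho>) q \<longrightarrow> (\<forall>j\<le>n. q j = p j))"
  using stable_ESS[OF qf_neg[OF assms(1)] assms(2,3)] by blast


lemma caseA:
  assumes "n \<ge> 1" "v > 0" "0 \<le> \<rho>" "\<rho> < v / 2" "v \<ge> 2 * real n + 2 * \<rho>"
  shows "\<exists>p. ESS n (payoffB v \<rho>) p
    \<and> (\<forall>q. ESS n (payoffB v \<rho>) q \<longrightarrow> (\<forall>j\<le>n. q j = p j))
    \<and> (\<forall>k<n. p k = 0) \<and> p n = 1"
proof -
  define p where "p k = (if k = n then 1 else 0 :: real)" for k
  have sp: "simplex n p" by (simp add: simplex_def p_def)
  have row: "(\<Sum>k\<le>n. payoffB v \<rho> j k * p k) = payoffB v \<rho> j n" for j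
    by (simp add: p_def if_distrib cong: if_cong)
  have "\<And>q. simplex n q \<Longrightarrow> bilin n (payoffB v \<rho>) q p \<le> bilin n (payoffB v \<rho>) p p"
  proof (rule NE_suff[OF sp, where E = "v/2 - real n - \<rho>"])
    fix j assume "j \<le> n"
    then show "(\<Sum>k\<le>n. payoffB v \<rho> j k * p k) \<le> v/2 - real n - \<rho>"
      using assms unfolding row by (auto simp: payoffB_def)
  next
    fix j assume "j \<le> n" "p j \<noteq> 0"
    then show "(\<Sum>k\<le>n. payoffB v \<rho> j k * p k) = v/2 - real n - \<rho>"
      unfolding row by (auto simp: payoffB_def p_def)
  qed
  then have "ESS n (payoffB v \<rho>) p \<and> (\<forall>q. ESS n (payoffB v \<rho>) q \<longrightarrow> (\<forall>j\<le>n. q j = p j))"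
    using key_ESS[OF assms(3) sp] by blast
  then show ?thesis by (intro exI[of _ p]) (auto simp: p_def)
qed


lemma caseB:
  assumes n1: "n \<ge> 1" and v0: "v > 0" and r0: "0 \<le> \<rho>" and rv: "\<rho> < v / 2"
    and nA: "\<not> v \<ge> 2 * real n + 2 * \<rho>"
  shows "\<exists>p. ESS n (payoffB v \<rho>) p
    \<and> (\<forall>q. ESS n (payoffB v \<rho>) q \<longrightarrow> (\<forall>j\<le>n. q j = p j))
    \<and> (\<exists>!s. s < n \<and> real n - 1 + \<rho> \<le> v / 2 + real s \<and> v / 2 + real s < real n + \<rho>)
         \<and> (\<forall>s. s < n \<and> real n - 1 + \<rho> \<le> v / 2 + real s \<and> v / 2 + real s < real n + \<rho> \<longrightarrow>
              (\<forall>k\<le>s. complex_of_real (p k) =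
                  (1 / cc n v \<rho> s) * complex_of_real ((- v / 2 - \<rho>) ^ k) *
                  (uu v \<rho> (int s - int k + 1)
                   + complex_of_real (real s + 1 - real n + v / 2 + \<rho>) * uu v \<rho> (int s - int k)
                   + complex_of_real ((real s + 1 - real n) * (v / 2 + \<rho>)) * uu v \<rho> (int s - int k - 1)))
            \<and> (\<forall>k. s + 1 \<le> k \<and> k \<le> n - 1 \<longrightarrow> p k = 0)
            \<and> complex_of_real (p n) = (1 / cc n v \<rho> s) * complex_of_real ((- v / 2 - \<rho>) ^ (s + 1)))"
proof -
  define a where "a = v/2 + \<rho>"
  define b where "b = v/2 - \<rho>"
  have a0: "a > 0" and b0: "b > 0" and ab1: "a - b + 1 > 0" using v0 r0 rv by (auto simp: a_def b_def)
  define m0 where "m0 = nat \<lfloor>b\<rfloor>"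
  have m0r: "real m0 = of_int \<lfloor>b\<rfloor>" using b0 by (simp add: m0_def)
  have m0b: "real m0 \<le> b" "b < real m0 + 1" unfolding m0r by linarith+
  have bn: "b < real n" using nA by (simp add: b_def)
  have m0n: "m0 < n" using m0b bn by linarith
  define s where "s = n - 1 - m0"
  have sn: "s < n" using n1 by (simp add: s_def)
  have sr: "real s = real n - 1 - real m0" using m0n by (simp add: s_def of_nat_diff)
  define m where "m = real n - real s - 1"
  have mb: "m \<le> b" "b < m + 1" using m0b sr by (simp_all add: m_def)
  let ?cond = "\<lambda>s. s < n \<and> real n - 1 + \<rho> \<le> v / 2 + real s \<and> v / 2 + real s < real n + \<rho>"
  have scond: "?cond s" using sn mb by (simp add: m_def b_def)
  have suniq: "s' = s" if "?cond s'" for s'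
  proof -
    have "real s' < real s + 1" "real s < real s' + 1" using that scond by linarith+
    then show ?thesis by linarith
  qed
  define r where "r k = (if k \<le> s then a ^ k * ff a b m (int s - int k)
                         else if k = n then a ^ (s + 1) else 0)" for k
  have rpos: "r k > 0" if "k \<le> s \<or> k = n" for k
    using that a0 ff_pos[OF _ a0 b0 ab1 mb] sn by (auto simp: r_def)
  have rnn: "r k \<ge> 0" for k
    using rpos[of k] by (cases "k \<le> s \<or> k = n") (auto simp: r_def)
  have rz: "r k = 0" if "s < k" "k \<noteq> n" for k using that by (simp add: r_def)
  have rn: "r n = a ^ (s + 1)" using sn by (simp add: r_def)
  define F where "F = (\<Sum>k\<le>n. r k)"
  have Fsplit: "F = (\<Sum>k\<le>s. r k) + a ^ (s + 1)"
  proof -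
    have "F = (\<Sum>k\<in>insert n {..s}. r k)" unfolding F_def
      by (rule sum.mono_neutral_right) (use sn rz in auto)
    then show ?thesis using sn rn by simp
  qed
  have FCC: "F = CC a b m (int s)"
    unfolding Fsplit sum_ff[symmetric] by (simp add: r_def)
  have F0: "F > 0" unfolding F_def
    using rpos[of n] rnn by (intro sum_pos2[of _ n]) auto
  define p where "p k = r k / F" for k
  have sp: "simplex n p"
  proof -
    have "r j \<le> F" if "j \<le> n" for j
      unfolding F_def using that rnn by (intro member_le_sum) auto
    then show ?thesis using F0 rnn
      by (auto simp: simplex_def p_def F_def[symmetric] simp flip: sum_divide_distrib)
  qed
  define R where "R j = (\<Sum>k\<le>n. payoffB v \<rho> j k * r k)" for j
  have Rp: "(\<Sum>k\<le>n. payoffB v \<rho> j k * p k) = R j / F" for j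
    by (simp add: R_def p_def sum_divide_distrib)
  have G: "a * r j + (b - 1) * r (Suc j) - (\<Sum>k\<in>{Suc j<..s}. r k) - a ^ (s + 1) = 0"
    if "j < s" for j
  proof -
    have "j \<le> s - 1" using that by simp
    then show ?thesis
    proof (induction j rule: inc_induct)
      case base
      have e: "Suc (s - 1) = s" "int s - int (s - 1) = 1" using that by auto
      have "a * r (s - 1) + (b - 1) * r s = a ^ s * (ff a b m 1 + (b - 1) * ff a b m 0)"
        using that unfolding r_def by (simp add: e algebra_simps power_eq_if)
      also have "\<dots> = a ^ (s + 1)" by (simp add: ff1)
      moreover have "Suc (s - Suc 0) = s" using that by simp
      ultimately show ?case by simp
    next
      case (step i)
      define J where "J = int s - int i - 2"
      have J0: "J \<ge> 0" using step by (simp add: J_def)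
      have i2: "Suc (Suc i) \<le> s" using step by simp
      have sset: "{Suc i<..s} = insert (Suc (Suc i)) {Suc (Suc i)<..s}" using i2 by auto
      have ri: "r i = a ^ i * ff a b m (J + 2)" "r (Suc i) = a ^ (Suc i) * ff a b m (J + 1)"
           "r (Suc (Suc i)) = a ^ (Suc (Suc i)) * ff a b m J"
        using i2 by (simp_all add: r_def J_def algebra_simps)
      have rec: "a * r i - (a - b + 1) * r (Suc i) - b * r (Suc (Suc i)) = 0"
        unfolding ri ff_rec[OF J0] by (simp add: algebra_simps)
      show ?case using step.IH rec unfolding sset by (simp add: algebra_simps)
    qed
  qed
  have Rconst: "R j = R 0" if "j \<le> s" for j
    using that
  proof (induction j)
    case 0 then show ?case by simp
  next
    case (Suc j)
    have js: "j < s" using Suc by simp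
    have "R (Suc j) - R j = a * r j + (b - 1) * r (Suc j) - (\<Sum>k\<in>{Suc j<..n}. r k)"
      unfolding R_def using row_diff[of j n v \<rho> r] js sn by (simp add: a_def b_def)
    also have "(\<Sum>k\<in>{Suc j<..n}. r k) = (\<Sum>k\<in>insert n {Suc j<..s}. r k)"
      apply (rule sum.mono_neutral_right)
      using sn js apply auto
      by (metis not_le rz)
    also have "\<dots> = a ^ (s + 1) + (\<Sum>k\<in>{Suc j<..s}. r k)" using sn rn by simp
    finally have "R (Suc j) - R j = 0" using G[OF js] by simp
    then show ?case using Suc by simp
  qed
  define A where "A = (\<Sum>k\<le>s. (v - real k) * r k)"
  have Rs: "R s = A - a * r s - real s * a ^ (s + 1)"
  proof -
    have "(\<Sum>k\<in>{s<..n}. r k) = (\<Sum>k\<in>{n}. r k)"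
      by (rule sum.mono_neutral_right) (use sn rz in auto)
    then have "(\<Sum>k\<in>{s<..n}. r k) = a ^ (s + 1)" using rn by simp
    moreover have "A = (\<Sum>k<s. (v - real k) * r k) + (v - real s) * r s"
      by (simp add: A_def lessThan_Suc_atMost[symmetric])
    ultimately show ?thesis unfolding R_def using row_formula[of s n v \<rho> r] sn
      by (simp add: a_def algebra_simps)
  qed
  have Rj: "R j = A + (if j = n then (v/2 - real n - \<rho>) * a ^ (s + 1) else - real j * a ^ (s + 1))"
    if "s < j" "j \<le> n" for j
  proof -
    have s1: "(\<Sum>k<j. (v - real k) * r k) = A"
      unfolding A_def by (rule sum.mono_neutral_right) (use that rz in auto)
    have s2: "(\<Sum>k\<in>{j<..n}. r k) = (if j = n then 0 else a ^ (s + 1))"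
    proof (cases "j = n")
      case True then show ?thesis by simp
    next
      case False
      have "(\<Sum>k\<in>{j<..n}. r k) = (\<Sum>k\<in>{n}. r k)"
        by (rule sum.mono_neutral_right) (use that False rz in auto)
      then show ?thesis using False rn by simp
    qed
    have s3: "r j = (if j = n then a ^ (s + 1) else 0)" using that rz rn by auto
    show ?thesis unfolding R_def row_formula[OF that(2)] s1 s2 s3 by (auto simp: algebra_simps)
  qed
  have ars: "a * r s = (m + 1 - b) * a ^ (s + 1)" by (simp add: r_def ff0 algebra_simps)
  have Rn: "R n = R s"
    unfolding Rs Rj[OF sn order.refl] using ars
    by (simp add: m_def b_def algebra_simps)
  have Rle: "R j \<le> R s" if "s < j" "j < n" for j
  proof -
    have "R s - R j = a ^ (s + 1) * (real j - real s - (m + 1 - b))"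
      unfolding Rs Rj[OF that(1) less_imp_le[OF that(2)]] using that ars by (simp add: algebra_simps)
    moreover have "real j - real s - (m + 1 - b) \<ge> 0" using that mb by simp
    moreover have "a ^ (s + 1) > 0" using a0 by simp
    ultimately have "R s - R j \<ge> 0" by (metis mult_nonneg_nonneg less_imp_le)
    then show ?thesis by simp
  qed
  have NE: "\<And>q. simplex n q \<Longrightarrow> bilin n (payoffB v \<rho>) q p \<le> bilin n (payoffB v \<rho>) p p"
  proof (rule NE_suff[OF sp, where E = "R s / F"])
    fix j assume j: "j \<le> n"
    show "(\<Sum>k\<le>n. payoffB v \<rho> j k * p k) \<le> R s / F"
      unfolding Rp using F0
    proof -
      have "R j \<le> R s"
        using Rconst[of j] Rconst[of s] Rn Rle[of j] j by (cases "j \<le> s"; cases "j = n") auto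
      then show "R j / F \<le> R s / F" using F0 by (simp add: divide_right_mono)
    qed
  next
    fix j assume j: "j \<le> n" "p j \<noteq> 0"
    then have "r j \<noteq> 0" by (auto simp: p_def)
    then have "j \<le> s \<or> j = n" using rz by (metis not_le)
    then show "(\<Sum>k\<le>n. payoffB v \<rho> j k * p k) = R s / F"
      unfolding Rp using Rconst[of j] Rconst[of s] Rn by auto
  qed
  have ess: "ESS n (payoffB v \<rho>) p \<and> (\<forall>q. ESS n (payoffB v \<rho>) q \<longrightarrow> (\<forall>j\<le>n. q j = p j))"
    using key_ESS[OF r0 sp NE] .
  have ccF: "cc n v \<rho> s = complex_of_real (sg (int s + 1) * F)"
    using cc_real[OF r0 rv sn] unfolding FCC by (simp add: a_def b_def m_def)
  have formk: "complex_of_real (p k) =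
                  (1 / cc n v \<rho> s) * complex_of_real ((- v / 2 - \<rho>) ^ k) *
                  (uu v \<rho> (int s - int k + 1)
                   + complex_of_real (real s + 1 - real n + v / 2 + \<rho>) * uu v \<rho> (int s - int k)
                   + complex_of_real ((real s + 1 - real n) * (v / 2 + \<rho>)) * uu v \<rho> (int s - int k - 1))"
    if "k \<le> s" for k
  proof -
    define J where "J = int s - int k"
    have J0: "J \<ge> 0" using that by (simp add: J_def)
    have u: "uu v \<rho> (J + 1) = complex_of_real (- sg J * wi a b (J + 1))"
            "uu v \<rho> J = complex_of_real (sg J * wi a b J)"
            "uu v \<rho> (J - 1) = complex_of_real (- sg J * wi a b (J - 1))"
      using uu_sg[OF r0 rv, of "J + 1"] uu_sg[OF r0 rv, of J] uu_sg[OF r0 rv, of "J - 1"] J0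
      by (simp_all add: sg_1 sg_m1 a_def b_def)
    have c1: "real s + 1 - real n + v / 2 + \<rho> = a - m" by (simp add: a_def m_def)
    have c2: "(real s + 1 - real n) * (v / 2 + \<rho>) = - (m * a)" by (simp add: a_def m_def algebra_simps)
    have pw: "(- v / 2 - \<rho>) ^ k = sg (int k) * a ^ k"
    proof -
      have "- v / 2 - \<rho> = - a" by (simp add: a_def)
      then have "(- v / 2 - \<rho>) ^ k = (- a) ^ k" by simp
      also have "\<dots> = (-1) ^ k * a ^ k" by (rule power_minus)
      finally show ?thesis by (simp only: sg_nat)
    qed
    have sgs: "sg (int k) * sg J = sg (int s)" unfolding J_def sg_add[symmetric] by simp
    have rk: "r k = a ^ k * ff a b m J" using that by (simp add: r_def J_def)
    have real_eq: "p k = (1 / (sg (int s + 1) * F)) * (sg (int k) * a ^ k) *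
        (- sg J * wi a b (J + 1) + (a - m) * (sg J * wi a b J) + (- (m * a)) * (- sg J * wi a b (J - 1)))"
    proof -
      have "(- sg J * wi a b (J + 1) + (a - m) * (sg J * wi a b J) + (- (m * a)) * (- sg J * wi a b (J - 1)))
          = - sg J * ff a b m J" (is "?X = _") by (simp add: ff_def algebra_simps)
      then have "(1 / (sg (int s + 1) * F)) * (sg (int k) * a ^ k) * ?X
          = (1 / (sg (int s + 1) * F)) * (sg (int k) * a ^ k) * (- sg J * ff a b m J)"
        by (simp only:)
      also have "\<dots> = - (sg (int k) * sg J) * a ^ k * ff a b m J / (sg (int s + 1) * F)"
        by (simp add: algebra_simps)
      also have "\<dots> = a ^ k * ff a b m J / F"
        unfolding sgs sg_1 using sg_nz[of "int s"] by (simp add: field_simps)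
      finally show ?thesis by (simp add: p_def rk)
    qed
    have e: "int s - int k + 1 = J + 1" "int s - int k - 1 = J - 1" by (simp_all add: J_def)
    show ?thesis
      unfolding e J_def[symmetric] u c1 c2 pw ccF
      by (simp add: real_eq)
  qed
  have formn: "complex_of_real (p n) = (1 / cc n v \<rho> s) * complex_of_real ((- v / 2 - \<rho>) ^ (s + 1))"
  proof -
    have "- v / 2 - \<rho> = - a" by (simp add: a_def)
    then have "(- v / 2 - \<rho>) ^ (s + 1) = (- a) ^ (s + 1)" by simp
    also have "\<dots> = (-1) ^ (s + 1) * a ^ (s + 1)" by (rule power_minus)
    also have "\<dots> = sg (int s + 1) * a ^ (s + 1)" by (simp only: sg_nat of_nat_add of_nat_1)
    finally have pw: "(- v / 2 - \<rho>) ^ (s + 1) = sg (int s + 1) * a ^ (s + 1)" .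
    have "p n = (1 / (sg (int s + 1) * F)) * (sg (int s + 1) * a ^ (s + 1))"
      using sg_nz[of "int s + 1"] by (simp add: p_def rn field_simps)
    then show ?thesis unfolding ccF pw by simp
  qed
  have zer: "p k = 0" if "s + 1 \<le> k" "k \<le> n - 1" for k
    using that sn rz[of k] by (simp add: p_def)
  show ?thesis
    apply (intro exI[of _ p] conjI)
    using ess apply blast
    using ess apply blast
    using scond suniq apply blast
    using suniq formk zer formn by blast
qed


theorem theorem5p2:
  fixes n :: nat and v \<rho> :: real
  assumes "n \<ge> 1" and "v > 0" and "0 \<le> \<rho>" and "\<rho> < v / 2"
  shows "\<exists>p. ESS n (payoffB v \<rho>) p
    \<and> (\<forall>q. ESS n (payoffB v \<rho>) q \<longrightarrow> (\<forall>j\<le>n. q j = p j))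
    \<and> (if v \<ge> 2 * real n + 2 * \<rho> then (\<forall>k<n. p k = 0) \<and> p n = 1
       else (\<exists>!s. s < n \<and> real n - 1 + \<rho> \<le> v / 2 + real s \<and> v / 2 + real s < real n + \<rho>)
         \<and> (\<forall>s. s < n \<and> real n - 1 + \<rho> \<le> v / 2 + real s \<and> v / 2 + real s < real n + \<rho> \<longrightarrow>
              (\<forall>k\<le>s. complex_of_real (p k) =
                  (1 / cc n v \<rho> s) * complex_of_real ((- v / 2 - \<rho>) ^ k) *
                  (uu v \<rho> (int s - int k + 1)
                   + complex_of_real (real s + 1 - real n + v / 2 + \<rho>) * uu v \<rho> (int s - int k)
                   + complex_of_real ((real s + 1 - real n) * (v / 2 + \<rho>)) * uu v \<rho> (int s - int k - 1)))
            \<and> (\<forall>k. s + 1 \<le> k \<and> k \<le> n - 1 \<longrightarrow> p k = 0)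
            \<and> complex_of_real (p n) = (1 / cc n v \<rho> s) * complex_of_real ((- v / 2 - \<rho>) ^ (s + 1))))"
proof (cases "v \<ge> 2 * real n + 2 * \<rho>")
  case True
  then show ?thesis using caseA[OF assms True] by simp
next
  case False
  then show ?thesis using caseB[OF assms False] by simp
qed

end
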